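(* Let $\mathfrak L$ be a left-resolving $\lambda$-graph system presenting a subshift $\Lambda$, with vertex sets $V_l=\{v_1^l,\dots,v_{m(l)}^l\}$. Consider: (i) $\mathfrak L$ satisfies condition (I); (ii) for every $l\in\mathbb Z_{\ge0}$, $v\in V_l$, $(x_n)_{n\in\mathbb N}\in\Gamma^+_\infty(v)$ and $m\in\mathbb N$ there is $(y_n)_{n\in\mathbb N}\in\Gamma^+_\infty(v)$ with $x_j=y_j$ for $j=1,\dots,m$ and $x_N\neq y_N$ for some $N>m$; (iii) for all $k,l\in\mathbb N$ with $k\le l$ there exist $y(i)\in\Gamma^+_\infty(v_i^l)$, $i=1,\dots,m(l)$, such that $\sigma_\Lambda^n(y(i))\neq y(j)$ for all $i,j=1,\dots,m(l)$ and $n=1,\dots,k$. Then (i) $\Leftrightarrow$ (ii) $\Rightarrow$ (iii). If moreover $\mathfrak L$ is the minimal presentation $\mathfrak L_\Lambda^{\min}$ of a normal subshift $\Lambda$, then (i), (ii), (iii) are all equivalent.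
   Context: A $\lambda$-graph system over a finite alphabet $\Sigma$ is $\mathfrak L=(V,E,\lambda,\iota)$ where $V=\bigsqcup_{l\ge0}V_l$ with $V_l$ finite, $E=\bigsqcup_{l\ge0}E_{l,l+1}$ with each $e\in E_{l,l+1}$ having source $s(e)\in V_l$ and terminal $t(e)\in V_{l+1}$, $\lambda:E\to\Sigma$ a labeling, $\iota:V_{l+1}\to V_l$ surjections, every vertex has an outgoing edge and every vertex of $V_{l+1}$ an incoming edge, and (local property) for $u\in V_{l-1}$, $v\in V_{l+1}$ there is a label-preserving bijection between $\{e\in E_{l,l+1}:t(e)=v,\ \iota(s(e))=u\}$ and $\{e\in E_{l-1,l}:s(e)=u,\ t(e)=\iota(v)\}$. It is left-resolving if $t(e)=t(f)$, $\lambda(e)=\lambda(f)$ imply $e=f$. The presented subshift $\Lambda$ has as admissible words the labels of finite paths; $X_\Lambda$ is its right one-sided subshift with shift $\sigma_\Lambda$. For $v\in V_l$, $\Gamma^+_\infty(v)=\{(\lambda(e_1),\lambda(e_2),\dots):s(e_1)=v,\ e_i\in E_{l+i-1,l+i},\ t(e_i)=s(e_{i+1})\}\subset X_\Lambda$. $\mathfrak L$ satisfies condition (I) if $\Gamma^+_\infty(v)$ contains at least two distinct sequences for every vertex $v$. For subshifts: $\Gamma_l^-(\mu)=\{\nu\in B_l(\Lambda):\nu\mu\in B_*(\Lambda)\}$, $\Gamma_*^+(\mu)=\{\nu:\mu\nu\in B_*(\Lambda)\}$; $\mu$ is $l$-synchronizing if $\Gamma_l^-(\mu)=\Gamma_l^-(\mu\omega)$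 for all $\omega\in\Gamma_*^+(\mu)$, $S_l(\Lambda)$ the set of these; $\mu\sim_l\nu$ iff $\Gamma_l^-(\mu)=\Gamma_l^-(\nu)$. $\Lambda$ is normal if irreducible, infinite, and for every $\eta\in B_l(\Lambda)$ and $k>l$ there is $\nu\in S_k(\Lambda)$ with $\eta\nu\in S_{k-l}(\Lambda)$. The minimal presentation $\mathfrak L_\Lambda^{\min}$ has $V_0$ a singleton, $V_l=S_l(\Lambda)/\!\sim_l$, an edge labeled $\alpha$ from $[\alpha\nu]_l$ to $[\nu]_{l+1}$ for $\nu\in S_{l+1}(\Lambda)$ with $\alpha\nu\in B_*(\Lambda)$, and $\iota([\nu]_{l+1})=[\nu]_l$. *)

theory Defs
  imports Main
begin

record ('v, 'e, 'a) lgraph =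
  lV :: "nat \<Rightarrow> 'v set"
  lE :: "nat \<Rightarrow> 'e set"
  src :: "'e \<Rightarrow> 'v"
  trg :: "'e \<Rightarrow> 'v"
  lab :: "'e \<Rightarrow> 'a"
  liota :: "nat \<Rightarrow> 'v \<Rightarrow> 'v"

definition is_lgs :: "'a set \<Rightarrow> ('v, 'e, 'a) lgraph \<Rightarrow> bool" where
  "is_lgs \<Sigma> L \<longleftrightarrow>
     finite \<Sigma> \<and>
     (\<forall>l. finite (lV L l)) \<and>
     (\<forall>l l'. l \<noteq> l' \<longrightarrow> lV L l \<inter> lV L l' = {}) \<and>
     (\<forall>l l'. l \<noteq> l' \<longrightarrow> lE L l \<inter> lE L l' = {}) \<and>
     (\<forall>l. \<forall>e\<in>lE L l. src L e \<in> lV L l \<and> trg L e \<in> lV L (Suc l) \<and> lab L e \<in> \<Sigma>) \<and>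
     (\<forall>l. liota L l ` lV L (Suc l) = lV L l) \<and>
     (\<forall>l. \<forall>v\<in>lV L l. \<exists>e\<in>lE L l. src L e = v) \<and>
     (\<forall>l. \<forall>v\<in>lV L (Suc l). \<exists>e\<in>lE L l. trg L e = v) \<and>
     (\<forall>l. \<forall>u\<in>lV L l. \<forall>v\<in>lV L (Suc (Suc l)).
        \<exists>f. bij_betw f {e\<in>lE L (Suc l). trg L e = v \<and> liota L l (src L e) = u}
                        {e\<in>lE L l. src L e = u \<and> trg L e = liota L (Suc l) v}
            \<and> (\<forall>e\<in>{e\<in>lE L (Suc l). trg L e = v \<and> liota L l (src L e) = u}. lab L (f e) = lab L e))"

definition left_resolving :: "('v, 'e, 'a) lgraph \<Rightarrow> bool" where
  "left_resolving L \<longleftrightarrow>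
     (\<forall>l. \<forall>e\<in>lE L l. \<forall>f\<in>lE L l. trg L e = trg L f \<and> lab L e = lab L f \<longrightarrow> e = f)"

text \<open>Infinite paths starting at vertex v of level l; sequences are indexed from 0
 (index 0 corresponds to the first coordinate x_1 of the paper).\<close>

definition Gamma_inf :: "('v, 'e, 'a) lgraph \<Rightarrow> nat \<Rightarrow> 'v \<Rightarrow> (nat \<Rightarrow> 'a) set" where
  "Gamma_inf L l v = {(\<lambda>n. lab L (es n)) | es.
      (\<forall>i. es i \<in> lE L (l + i)) \<and> src L (es 0) = v \<and> (\<forall>i. trg L (es i) = src L (es (Suc i)))}"

definition shift :: "(nat \<Rightarrow> 'a) \<Rightarrow> (nat \<Rightarrow> 'a)" where
  "shift x = (\<lambda>i. x (Suc i))"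

definition condI :: "('v, 'e, 'a) lgraph \<Rightarrow> bool" where
  "condI L \<longleftrightarrow> (\<forall>l. \<forall>v\<in>lV L l. \<exists>x\<in>Gamma_inf L l v. \<exists>y\<in>Gamma_inf L l v. x \<noteq> y)"

definition condII :: "('v, 'e, 'a) lgraph \<Rightarrow> bool" where
  "condII L \<longleftrightarrow> (\<forall>l. \<forall>v\<in>lV L l. \<forall>x\<in>Gamma_inf L l v. \<forall>m::nat. m \<ge> 1 \<longrightarrow>
      (\<exists>y\<in>Gamma_inf L l v. (\<forall>j\<in>{1..m}. x (j - 1) = y (j - 1)) \<and>
                             (\<exists>N>m. x (N - 1) \<noteq> y (N - 1))))"

definition condIII :: "('v, 'e, 'a) lgraph \<Rightarrow> bool" where
  "condIII L \<longleftrightarrow> (\<forall>k l::nat. 1 \<le> k \<and> k \<le> l \<longrightarrow>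
      (\<exists>y. (\<forall>v\<in>lV L l. y v \<in> Gamma_inf L l v) \<and>
           (\<forall>v\<in>lV L l. \<forall>w\<in>lV L l. \<forall>n\<in>{1..k}. (shift ^^ n) (y v) \<noteq> y w)))"

text \<open>A (two-sided) subshift over the finite alphabet Sigma is represented by its
 language B = B_*(Lambda): a nonempty factorial, bi-extendable set of words.\<close>

definition is_subshift_lang :: "'a set \<Rightarrow> 'a list set \<Rightarrow> bool" where
  "is_subshift_lang \<Sigma> B \<longleftrightarrow> finite \<Sigma> \<and> B \<subseteq> lists \<Sigma> \<and> B \<noteq> {} \<and>
     (\<forall>u v w. u @ v @ w \<in> B \<longrightarrow> v \<in> B) \<and>
     (\<forall>w\<in>B. \<exists>a b. a # w @ [b] \<in> B)"

definition subshift_points :: "'a list set \<Rightarrow> (int \<Rightarrow> 'a) set" where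
  "subshift_points B = {x. \<forall>i::int. \<forall>n::nat. map (\<lambda>k. x (i + int k)) [0..<n] \<in> B}"

definition irreducible_lang :: "'a list set \<Rightarrow> bool" where
  "irreducible_lang B \<longleftrightarrow> (\<forall>u\<in>B. \<forall>w\<in>B. \<exists>v. u @ v @ w \<in> B)"

definition Gamma_minus :: "'a list set \<Rightarrow> nat \<Rightarrow> 'a list \<Rightarrow> 'a list set" where
  "Gamma_minus B l \<mu> = {\<nu>\<in>B. length \<nu> = l \<and> \<nu> @ \<mu> \<in> B}"

definition Gamma_plus :: "'a list set \<Rightarrow> 'a list \<Rightarrow> 'a list set" where
  "Gamma_plus B \<mu> = {\<nu>. \<mu> @ \<nu> \<in> B}"

definition Sync :: "'a list set \<Rightarrow> nat \<Rightarrow> 'a list set" where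
  "Sync B l = {\<mu>\<in>B. \<forall>\<omega>\<in>Gamma_plus B \<mu>. Gamma_minus B l \<mu> = Gamma_minus B l (\<mu> @ \<omega>)}"

definition normal_subshift :: "'a set \<Rightarrow> 'a list set \<Rightarrow> bool" where
  "normal_subshift \<Sigma> B \<longleftrightarrow> is_subshift_lang \<Sigma> B \<and> irreducible_lang B \<and>
     infinite (subshift_points B) \<and>
     (\<forall>\<eta>\<in>B. \<forall>k. k > length \<eta> \<longrightarrow>
        (\<exists>\<nu>\<in>Sync B k. \<eta> @ \<nu> \<in> Sync B (k - length \<eta>)))"

definition lclass :: "'a list set \<Rightarrow> nat \<Rightarrow> 'a list \<Rightarrow> 'a list set" where
  "lclass B l \<nu> = {\<mu>\<in>Sync B l. Gamma_minus B l \<mu> = Gamma_minus B l \<nu>}"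

definition min_pres :: "'a list set \<Rightarrow>
    (nat \<times> 'a list set, (nat \<times> 'a list set) \<times> 'a \<times> (nat \<times> 'a list set), 'a) lgraph" where
  "min_pres B = \<lparr>
     lV = (\<lambda>l. {(l, lclass B l \<nu>) | \<nu>. \<nu> \<in> Sync B l}),
     lE = (\<lambda>l. {((l, lclass B l (\<alpha> # \<nu>)), \<alpha>, (Suc l, lclass B (Suc l) \<nu>)) | \<alpha> \<nu>.
                 \<nu> \<in> Sync B (Suc l) \<and> \<alpha> # \<nu> \<in> B}),
     src = (\<lambda>e. fst e),
     trg = (\<lambda>e. snd (snd e)),
     lab = (\<lambda>e. fst (snd e)),
     liota = (\<lambda>l v. (l, lclass B l (SOME \<nu>. \<nu> \<in> snd v))) \<rparr>"

end

theory Submission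
  imports Defs
begin

lemma Gamma_inf_iff:
  "x \<in> Gamma_inf L l v \<longleftrightarrow> (\<exists>es. x = (\<lambda>n. lab L (es n)) \<and> (\<forall>i. es i \<in> lE L (l + i))
      \<and> src L (es 0) = v \<and> (\<forall>i. trg L (es i) = src L (es (Suc i))))"
  unfolding Gamma_inf_def by blast

lemma I_imp_II:
  assumes tc: "\<And>l e. e \<in> lE L l \<Longrightarrow> trg L e \<in> lV L (Suc l)" and I: "condI L"
  shows "condII L"
  unfolding condII_def
proof (intro allI ballI impI)
  fix l v x and m :: nat
  assume v: "v \<in> lV L l" and x: "x \<in> Gamma_inf L l v" and m: "1 \<le> m"
  obtain es where xes: "x = (\<lambda>n. lab L (es n))" and es1: "\<forall>i. es i \<in> lE L (l+i)"
    and es2: "src L (es 0) = v" and es3: "\<forall>i. trg L (es i) = src L (es (Suc i))"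
    using x unfolding Gamma_inf_iff by blast
  define w where "w = trg L (es (m-1))"
  have sm: "Suc (m-1) = m" using m by simp
  have "w \<in> lV L (Suc (l + (m-1)))" unfolding w_def using tc es1 by blast
  then have w: "w \<in> lV L (l+m)" using sm by simp
  have wsrc: "w = src L (es m)" unfolding w_def using es3 sm by metis
  define t where "t = (\<lambda>n. x (n+m))"
  have esm: "\<forall>i. es (i+m) \<in> lE L (l+m+i)" using es1 by (metis add.commute add.left_commute)
  have t: "t \<in> Gamma_inf L (l+m) w"
    unfolding Gamma_inf_iff
    apply (rule exI[of _ "\<lambda>i. es (i+m)"])
    using es3 wsrc esm by (auto simp: t_def xes)
  obtain z1 z2 where "z1 \<in> Gamma_inf L (l+m) w" "z2 \<in> Gamma_inf L (l+m) w" "z1 \<noteq> z2"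
    using I w unfolding condI_def by blast
  then obtain z where z: "z \<in> Gamma_inf L (l+m) w" "z \<noteq> t" by metis
  obtain fs where zfs: "z = (\<lambda>n. lab L (fs n))" and fs1: "\<forall>i. fs i \<in> lE L (l+m+i)"
    and fs2: "src L (fs 0) = w" and fs3: "\<forall>i. trg L (fs i) = src L (fs (Suc i))"
    using z(1) unfolding Gamma_inf_iff by blast
  define gs where "gs = (\<lambda>i. if i < m then es i else fs (i - m))"
  have g1: "gs i \<in> lE L (l+i)" for i
  proof (cases "i < m")
    case True then show ?thesis using es1 by (simp add: gs_def)
  next
    case False
    then have "l + m + (i - m) = l + i" by simp
    then show ?thesis using False fs1 by (metis gs_def)
  qed
  have g2: "src L (gs 0) = v" using m es2 by (simp add: gs_def)
  have g3: "trg L (gs i) = src L (gs (Suc i))" for i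
  proof -
    consider "Suc i < m" | "Suc i = m" | "m \<le> i" by linarith
    then show ?thesis
    proof cases
      case 1 then show ?thesis using es3 by (simp add: gs_def)
    next
      case 2 then have "m - 1 = i" by simp
      then show ?thesis using fs2 2 by (simp add: gs_def w_def)
    next
      case 3
      then have "Suc i - m = Suc (i - m)" by simp
      then show ?thesis using 3 fs3 by (simp add: gs_def)
    qed
  qed
  have yin: "(\<lambda>n. lab L (gs n)) \<in> Gamma_inf L l v"
    unfolding Gamma_inf_iff using g1 g2 g3 by blast
  have agree: "\<forall>j\<in>{1..m}. x (j - 1) = lab L (gs (j - 1))"
    by (auto simp: gs_def xes)
  obtain n where n: "z n \<noteq> t n" using z(2) by (meson ext)
  have "x (Suc (n+m) - 1) \<noteq> lab L (gs (Suc (n+m) - 1))"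
    using n by (simp add: gs_def zfs t_def)
  then have exN: "\<exists>N>m. x (N - 1) \<noteq> lab L (gs (N - 1))"
    by (intro exI[of _ "Suc (n+m)"]) simp
  show "\<exists>y\<in>Gamma_inf L l v. (\<forall>j\<in>{1..m}. x (j - 1) = y (j - 1)) \<and> (\<exists>N>m. x (N - 1) \<noteq> y (N - 1))"
    apply (rule bexI[OF _ yin])
    using agree exN by auto
qed

lemma Gamma_nonempty:
  assumes tc: "\<And>l e. e \<in> lE L l \<Longrightarrow> trg L e \<in> lV L (Suc l)"
    and out: "\<And>l v. v \<in> lV L l \<Longrightarrow> \<exists>e\<in>lE L l. src L e = v"
    and v: "v \<in> lV L l"
  shows "\<exists>x. x \<in> Gamma_inf L l v"
proof -
  define nx where "nx = (\<lambda>k w. SOME e. e \<in> lE L k \<and> src L e = w)"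
  have nx: "nx k w \<in> lE L k \<and> src L (nx k w) = w" if "w \<in> lV L k" for k w
    unfolding nx_def by (rule someI_ex) (use out[OF that] in blast)
  define es where "es = rec_nat (nx l v) (\<lambda>i e. nx (Suc (l+i)) (trg L e))"
  have es0: "es 0 = nx l v" and esS: "\<And>i. es (Suc i) = nx (Suc (l+i)) (trg L (es i))"
    by (simp_all add: es_def)
  have E: "es i \<in> lE L (l+i)" for i
  proof (induction i)
    case 0 then show ?case using nx[OF v] es0 by simp
  next
    case (Suc i) then show ?case using nx[OF tc[OF Suc]] esS by simp
  qed
  have "src L (es 0) = v" using nx[OF v] es0 by simp
  moreover have "trg L (es i) = src L (es (Suc i))" for i using nx[OF tc[OF E[of i]]] esS by simp
  ultimately show ?thesis unfolding Gamma_inf_iff using E by blast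
qed

lemma II_imp_I:
  assumes tc: "\<And>l e. e \<in> lE L l \<Longrightarrow> trg L e \<in> lV L (Suc l)"
    and out: "\<And>l v. v \<in> lV L l \<Longrightarrow> \<exists>e\<in>lE L l. src L e = v"
    and II: "condII L"
  shows "condI L"
  unfolding condI_def
proof (intro allI ballI)
  fix l v assume v: "v \<in> lV L l"
  obtain x where x: "x \<in> Gamma_inf L l v" using Gamma_nonempty[OF tc out v] by blast
  obtain y N where "y \<in> Gamma_inf L l v" "N > 1" "x (N-1) \<noteq> y (N-1)"
    using II v x unfolding condII_def by (metis order_refl)
  then show "\<exists>x\<in>Gamma_inf L l v. \<exists>y\<in>Gamma_inf L l v. x \<noteq> y" using x by metis
qed

lemma shift_pow: "(shift ^^ n) f = (\<lambda>i. f (i + n))"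
  by (induction n) (auto simp: shift_def)

lemma fin_pre:
  assumes "finite S"
  shows "finite {f. (\<forall>i. f i \<in> S) \<and> (shift ^^ n) f = g}"
proof -
  let ?h = "\<lambda>xs::'a list. (\<lambda>i. if i < n then xs ! i else g (i - n))"
  have "{f. (\<forall>i. f i \<in> S) \<and> (shift ^^ n) f = g} \<subseteq> ?h ` {xs. set xs \<subseteq> S \<and> length xs = n}"
  proof
    fix f assume "f \<in> {f. (\<forall>i. f i \<in> S) \<and> (shift ^^ n) f = g}"
    then have fS: "\<forall>i. f i \<in> S" and fg: "\<And>i. f (i+n) = g i" by (auto simp: shift_pow fun_eq_iff)
    have "f = ?h (map f [0..<n])"
    proof
      fix i show "f i = ?h (map f [0..<n]) i"
        using fg[of "i-n"] by auto
    qed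
    moreover have "map f [0..<n] \<in> {xs. set xs \<subseteq> S \<and> length xs = n}" using fS by auto
    ultimately show "f \<in> ?h ` {xs. set xs \<subseteq> S \<and> length xs = n}" by blast
  qed
  then show ?thesis by (rule finite_subset) (intro finite_imageI finite_lists_length_eq assms)
qed

lemma periodic_mod:
  fixes f :: "nat \<Rightarrow> 'b" and i n :: nat
  assumes "\<And>i. f (i + n) = f i" "1 \<le> n"
  shows "f i = f (i mod n)"
proof (induction i rule: less_induct)
  case (less i)
  show ?case
  proof (cases "i < n")
    case True then show ?thesis by simp
  next
    case False
    then have "f i = f (i - n)" using assms(1)[of "i-n"] by simp
    also have "\<dots> = f ((i - n) mod n)" using less False assms(2) by simp
    also have "(i - n) mod n = i mod n" using False by (simp add: le_mod_geq)
    finally show ?thesis .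
  qed
qed

lemma fin_per:
  assumes "finite S" "1 \<le> n"
  shows "finite {f. (\<forall>i. f i \<in> S) \<and> (shift ^^ n) f = f}"
proof -
  let ?h = "\<lambda>xs::'a list. (\<lambda>i. xs ! (i mod n))"
  have "{f. (\<forall>i. f i \<in> S) \<and> (shift ^^ n) f = f} \<subseteq> ?h ` {xs. set xs \<subseteq> S \<and> length xs = n}"
  proof
    fix f assume "f \<in> {f. (\<forall>i. f i \<in> S) \<and> (shift ^^ n) f = f}"
    then have fS: "\<forall>i. f i \<in> S" and fg: "\<And>i. f (i+n) = f i" by (auto simp: shift_pow fun_eq_iff)
    have "f = ?h (map f [0..<n])"
    proof
      fix i show "f i = ?h (map f [0..<n]) i"
        using periodic_mod[where f=f and n=n and i=i, OF fg assms(2)] assms(2) by simp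
    qed
    moreover have "map f [0..<n] \<in> {xs. set xs \<subseteq> S \<and> length xs = n}" using fS by auto
    ultimately show "f \<in> ?h ` {xs. set xs \<subseteq> S \<and> length xs = n}" by blast
  qed
  then show ?thesis by (rule finite_subset) (intro finite_imageI finite_lists_length_eq assms)
qed

lemma choose_y:
  assumes "finite V" "finite S" "\<And>v. v \<in> V \<Longrightarrow> G v \<subseteq> {f. \<forall>i. f i \<in> S}"
    "\<And>v. v \<in> V \<Longrightarrow> infinite (G v)"
  shows "\<exists>y. (\<forall>v\<in>V. y v \<in> G v) \<and> (\<forall>v\<in>V. \<forall>w\<in>V. \<forall>n\<in>{1..k}. (shift ^^ n) (y v) \<noteq> y w)"
  using assms(1,3,4)
proof (induction V rule: finite_induct)
  case empty then show ?case by simp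
next
  case (insert a F)
  have "\<exists>y. (\<forall>v\<in>F. y v \<in> G v) \<and> (\<forall>v\<in>F. \<forall>w\<in>F. \<forall>n\<in>{1..k}. (shift ^^ n) (y v) \<noteq> y w)"
    by (rule insert.IH) (use insert.prems in auto)
  then obtain y where y1: "\<forall>v\<in>F. y v \<in> G v"
    and y2: "\<forall>v\<in>F. \<forall>w\<in>F. \<forall>n\<in>{1..k}. (shift ^^ n) (y v) \<noteq> y w" by blast
  define Bad where "Bad = (\<lambda>(w,n). (shift ^^ n) (y w)) ` (F \<times> {1..k})
     \<union> (\<Union>w\<in>F. \<Union>n\<in>{1..k}. {f. (\<forall>i. f i \<in> S) \<and> (shift ^^ n) f = y w})
     \<union> (\<Union>n\<in>{1..k}. {f. (\<forall>i. f i \<in> S) \<and> (shift ^^ n) f = f})"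
  have "finite Bad" unfolding Bad_def
    using insert.hyps(1) fin_pre[OF assms(2)] fin_per[OF assms(2)] by auto
  moreover have "infinite (G a)" using insert.prems by simp
  ultimately have "infinite (G a - Bad)" by (simp add: Diff_infinite_finite)
  then obtain z where z: "z \<in> G a" "z \<notin> Bad" by (metis Diff_iff finite.emptyI ex_in_conv)
  have zS: "\<forall>i. z i \<in> S" using insert.prems(1)[of a] z by auto
  have zb1: "\<And>w n. w \<in> F \<Longrightarrow> n \<in> {1..k} \<Longrightarrow> (shift ^^ n) (y w) \<noteq> z"
    using z(2) unfolding Bad_def by (metis (no_types, lifting) UnI1 case_prod_conv mem_Sigma_iff rev_image_eqI)
  have zb2: "\<And>w n. w \<in> F \<Longrightarrow> n \<in> {1..k} \<Longrightarrow> (shift ^^ n) z \<noteq> y w"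
    using z(2) zS unfolding Bad_def by blast
  have zb3: "\<And>n. n \<in> {1..k} \<Longrightarrow> (shift ^^ n) z \<noteq> z"
    using z(2) zS unfolding Bad_def by blast
  show ?case
    apply (rule exI[of _ "y(a := z)"])
    using y1 y2 z(1) zb1 zb2 zb3 insert.hyps(2) by auto
qed

lemma II_infinite:
  assumes II: "condII L" and v: "v \<in> lV L l" and x: "x \<in> Gamma_inf L l v"
  shows "infinite (Gamma_inf L l v)"
proof
  assume fin: "finite (Gamma_inf L l v)"
  define D where "D = Gamma_inf L l v - {x}"
  have "\<forall>z\<in>D. \<exists>n. z n \<noteq> x n" unfolding D_def by (auto simp: fun_eq_iff)
  then obtain f where f: "\<forall>z\<in>D. z (f z) \<noteq> x (f z)" by metis
  define M where "M = Max (insert 0 (f ` D))"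
  have finD: "finite D" using fin unfolding D_def by simp
  have fM: "z \<in> D \<Longrightarrow> f z \<le> M" for z unfolding M_def using finD by simp
  obtain y where y: "y \<in> Gamma_inf L l v" "\<forall>j\<in>{1..Suc M}. x (j - 1) = y (j - 1)"
    "\<exists>N>Suc M. x (N - 1) \<noteq> y (N - 1)"
    using II v x unfolding condII_def by (metis le_add1 plus_1_eq_Suc)
  have "y \<noteq> x" using y(3) by auto
  then have yD: "y \<in> D" using y(1) unfolding D_def by simp
  have "Suc (f y) \<in> {1..Suc M}" using fM[OF yD] by simp
  then have "x (f y) = y (f y)" using y(2) by fastforce
  then show False using f yD by metis
qed

lemma II_imp_III:
  assumes fin: "\<And>l. finite (lV L l)" and S: "finite S"
    and lab: "\<And>l e. e \<in> lE L l \<Longrightarrow> lab L e \<in> S"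
    and ne: "\<And>l v. v \<in> lV L l \<Longrightarrow> \<exists>x. x \<in> Gamma_inf L l v"
    and II: "condII L"
  shows "condIII L"
  unfolding condIII_def
proof (intro allI impI)
  fix k l :: nat
  have sub: "Gamma_inf L l v \<subseteq> {f. \<forall>i. f i \<in> S}" for v
  proof
    fix x assume "x \<in> Gamma_inf L l v"
    then obtain es where "x = (\<lambda>n. lab L (es n))" "\<forall>i. es i \<in> lE L (l + i)"
      unfolding Gamma_inf_iff by blast
    then show "x \<in> {f. \<forall>i. f i \<in> S}" using lab by auto
  qed
  have inf: "infinite (Gamma_inf L l v)" if "v \<in> lV L l" for v
    using ne[OF that] II_infinite[OF II that] by blast
  show "\<exists>y. (\<forall>v\<in>lV L l. y v \<in> Gamma_inf L l v) \<and>
           (\<forall>v\<in>lV L l. \<forall>w\<in>lV L l. \<forall>n\<in>{1..k}. (shift ^^ n) (y v) \<noteq> y w)"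
    by (rule choose_y[OF fin S sub inf])
qed


lemma Sync_B: "\<mu> \<in> Sync B k \<Longrightarrow> \<mu> \<in> B" by (simp add: Sync_def)

lemma lclass_Gm: "a \<in> Sync B L \<Longrightarrow> lclass B L a = lclass B L b \<Longrightarrow> Gamma_minus B L a = Gamma_minus B L b"
proof -
  assume a: "a \<in> Sync B L" and e: "lclass B L a = lclass B L b"
  have "a \<in> lclass B L a" using a by (simp add: lclass_def)
  then have "a \<in> lclass B L b" using e by simp
  then show ?thesis by (simp add: lclass_def)
qed

lemma Gm_lclass: "Gamma_minus B L a = Gamma_minus B L b \<Longrightarrow> lclass B L a = lclass B L b"
  by (simp add: lclass_def)

lemma Sync_ext_Gm: "a \<in> Sync B L \<Longrightarrow> a @ \<omega> \<in> B \<Longrightarrow> Gamma_minus B L (a @ \<omega>) = Gamma_minus B L a"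
  unfolding Sync_def Gamma_plus_def by auto

context
  fixes \<Sigma> :: "'a set" and B :: "'a list set"
  assumes sl: "is_subshift_lang \<Sigma> B"
begin

lemma sl_factor: "u @ v @ w \<in> B \<Longrightarrow> v \<in> B"
  using sl unfolding is_subshift_lang_def by blast

lemma sl_prefix: "u @ v \<in> B \<Longrightarrow> u \<in> B"
  using sl_factor[of "[]" u v] by simp

lemma sl_suffix: "u @ v \<in> B \<Longrightarrow> v \<in> B"
  using sl_factor[of u v "[]"] by simp

lemma sl_left: "w \<in> B \<Longrightarrow> \<exists>a. a # w \<in> B"
proof -
  assume "w \<in> B"
  then obtain a b where "a # w @ [b] \<in> B" using sl unfolding is_subshift_lang_def by blast
  then have "(a # w) @ [b] \<in> B" by simp
  then show ?thesis using sl_prefix by blast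
qed

lemma sl_nil: "[] \<in> B"
proof -
  obtain w where "w \<in> B" using sl unfolding is_subshift_lang_def by blast
  then show ?thesis using sl_prefix[of "[]" w] by simp
qed

lemma Gm_down_sub:
  assumes "Gamma_minus B (Suc L) a \<subseteq> Gamma_minus B (Suc L) b"
  shows "Gamma_minus B L a \<subseteq> Gamma_minus B L b"
proof
  fix \<eta> assume "\<eta> \<in> Gamma_minus B L a"
  then have h: "\<eta> \<in> B" "length \<eta> = L" "\<eta> @ a \<in> B" by (auto simp: Gamma_minus_def)
  obtain c where c: "c # \<eta> @ a \<in> B" using sl_left[OF h(3)] by blast
  have "c # \<eta> \<in> B" using sl_prefix[of "c # \<eta>" a] c by simp
  then have "c # \<eta> \<in> Gamma_minus B (Suc L) a" using c h by (simp add: Gamma_minus_def)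
  then have "c # \<eta> \<in> Gamma_minus B (Suc L) b" using assms by blast
  then have "[c] @ (\<eta> @ b) \<in> B" by (simp add: Gamma_minus_def)
  then have "\<eta> @ b \<in> B" by (rule sl_suffix)
  then show "\<eta> \<in> Gamma_minus B L b" using h by (simp add: Gamma_minus_def)
qed

lemma Gm_down:
  "Gamma_minus B (Suc L) a = Gamma_minus B (Suc L) b \<Longrightarrow> Gamma_minus B L a = Gamma_minus B L b"
  using Gm_down_sub by (metis equalityI order_refl)


lemma Sync_mono: "\<mu> \<in> Sync B (Suc L) \<Longrightarrow> \<mu> \<in> Sync B L"
  unfolding Sync_def using Gm_down by blast

lemma Sync_left:
  assumes \<rho>: "\<rho> \<in> Sync B k" and g: "\<gamma> @ \<rho> \<in> B" and len: "length \<gamma> \<le> k"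
  shows "\<gamma> @ \<rho> \<in> Sync B (k - length \<gamma>)"
  unfolding Sync_def
proof (intro CollectI conjI ballI g)
  fix \<omega> assume "\<omega> \<in> Gamma_plus B (\<gamma> @ \<rho>)"
  then have w: "\<gamma> @ \<rho> @ \<omega> \<in> B" by (simp add: Gamma_plus_def)
  then have "\<rho> @ \<omega> \<in> B" using sl_suffix by blast
  then have eq: "Gamma_minus B k \<rho> = Gamma_minus B k (\<rho> @ \<omega>)"
    using \<rho> unfolding Sync_def Gamma_plus_def by blast
  have key: "\<eta> @ \<gamma> @ \<rho> \<in> B \<longleftrightarrow> \<eta> @ \<gamma> @ \<rho> @ \<omega> \<in> B" if "length \<eta> = k - length \<gamma>" for \<eta>
  proof -
    have l: "length (\<eta> @ \<gamma>) = k" using that len by simp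
    have "(\<eta> @ \<gamma> \<in> Gamma_minus B k \<rho>) = (\<eta> @ \<gamma> \<in> Gamma_minus B k (\<rho> @ \<omega>))" using eq by simp
    then show ?thesis using l sl_prefix[of "\<eta> @ \<gamma>" \<rho>] sl_prefix[of "\<eta> @ \<gamma>" "\<rho> @ \<omega>"]
      by (auto simp: Gamma_minus_def)
  qed
  show "Gamma_minus B (k - length \<gamma>) (\<gamma> @ \<rho>) = Gamma_minus B (k - length \<gamma>) ((\<gamma> @ \<rho>) @ \<omega>)"
    using key by (auto simp: Gamma_minus_def)
qed

end

lemma mp_V: "v \<in> lV (min_pres B) l \<longleftrightarrow> (\<exists>\<nu>. v = (l, lclass B l \<nu>) \<and> \<nu> \<in> Sync B l)"
  by (auto simp: min_pres_def)

lemma mp_E: "e \<in> lE (min_pres B) l \<longleftrightarrow> (\<exists>\<alpha> \<nu>. e = ((l, lclass B l (\<alpha> # \<nu>)), \<alpha>, (Suc l, lclass B (Suc l) \<nu>))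
     \<and> \<nu> \<in> Sync B (Suc l) \<and> \<alpha> # \<nu> \<in> B)"
  by (auto simp: min_pres_def)

lemma mp_src[simp]: "src (min_pres B) e = fst e" by (simp add: min_pres_def)
lemma mp_trg[simp]: "trg (min_pres B) e = snd (snd e)" by (simp add: min_pres_def)
lemma mp_lab[simp]: "lab (min_pres B) e = fst (snd e)" by (simp add: min_pres_def)

lemma mp_tc: "e \<in> lE (min_pres B) l \<Longrightarrow> trg (min_pres B) e \<in> lV (min_pres B) (Suc l)"
  unfolding mp_E mp_V by auto

lemma mp_lab_in:
  assumes "is_subshift_lang \<Sigma> B" "e \<in> lE (min_pres B) l"
  shows "lab (min_pres B) e \<in> \<Sigma>"
proof -
  obtain \<alpha> \<nu> where "e = ((l, lclass B l (\<alpha> # \<nu>)), \<alpha>, (Suc l, lclass B (Suc l) \<nu>))" "\<alpha> # \<nu> \<in> B"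
    using assms(2) unfolding mp_E by blast
  moreover have "B \<subseteq> lists \<Sigma>" using assms(1) by (simp add: is_subshift_lang_def)
  ultimately show ?thesis by auto
qed

lemma mp_fin:
  assumes "is_subshift_lang \<Sigma> B"
  shows "finite (lV (min_pres B) l)"
proof -
  have fS: "finite \<Sigma>" and BS: "B \<subseteq> lists \<Sigma>" using assms by (auto simp: is_subshift_lang_def)
  let ?f = "\<lambda>G. (l, {\<mu>\<in>Sync B l. Gamma_minus B l \<mu> = G})"
  have "lV (min_pres B) l \<subseteq> ?f ` Pow {xs. set xs \<subseteq> \<Sigma> \<and> length xs = l}"
  proof
    fix v assume "v \<in> lV (min_pres B) l"
    then obtain \<nu> where v: "v = (l, lclass B l \<nu>)" unfolding mp_V by blast
    have "Gamma_minus B l \<nu> \<subseteq> {xs. set xs \<subseteq> \<Sigma> \<and> length xs = l}"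
      using BS by (auto simp: Gamma_minus_def)
    moreover have "v = ?f (Gamma_minus B l \<nu>)" by (simp add: v lclass_def)
    ultimately show "v \<in> ?f ` Pow {xs. set xs \<subseteq> \<Sigma> \<and> length xs = l}" by blast
  qed
  then show ?thesis by (rule finite_subset) (intro finite_imageI finite_Pow_iff[THEN iffD2] finite_lists_length_eq fS)
qed

lemma normal_sl: "normal_subshift \<Sigma> B \<Longrightarrow> is_subshift_lang \<Sigma> B"
  by (simp add: normal_subshift_def)

lemma normal_ex:
  "normal_subshift \<Sigma> B \<Longrightarrow> \<eta> \<in> B \<Longrightarrow> length \<eta> < k \<Longrightarrow> \<exists>\<nu>\<in>Sync B k. \<eta> @ \<nu> \<in> Sync B (k - length \<eta>)"
  by (simp add: normal_subshift_def)

lemma mp_out: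
  assumes N: "normal_subshift \<Sigma> B" and v: "v \<in> lV (min_pres B) l"
  shows "\<exists>e\<in>lE (min_pres B) l. src (min_pres B) e = v"
proof -
  have sl: "is_subshift_lang \<Sigma> B" using N by (rule normal_sl)
  obtain \<nu> where v: "v = (l, lclass B l \<nu>)" and \<nu>: "\<nu> \<in> Sync B l" using v unfolding mp_V by blast
  show ?thesis
  proof (cases \<nu>)
    case Nil
    obtain \<rho> where \<rho>: "\<rho> \<in> Sync B (Suc l)" using normal_ex[OF N sl_nil[OF sl], of "Suc l"] by auto
    obtain a where a: "a # \<rho> \<in> B" using sl_left[OF sl Sync_B[OF \<rho>]] by blast
    have "Gamma_minus B l ([] @ (a # \<rho>)) = Gamma_minus B l []"
      using Sync_ext_Gm[where a="[]" and L=l and \<omega>="a # \<rho>"] \<nu> Nil a by simp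
    then have "lclass B l (a # \<rho>) = lclass B l \<nu>" using Nil Gm_lclass by simp
    moreover have e: "((l, lclass B l (a # \<rho>)), a, (Suc l, lclass B (Suc l) \<rho>)) \<in> lE (min_pres B) l"
      unfolding mp_E using \<rho> a by blast
    ultimately show ?thesis using v by (intro bexI[OF _ e]) simp
  next
    case (Cons \<alpha> \<nu>0)
    define k where "k = length \<nu> + l + 1"
    obtain \<rho> where \<rho>: "\<rho> \<in> Sync B k" "\<nu> @ \<rho> \<in> Sync B (k - length \<nu>)"
      using normal_ex[OF N Sync_B[OF \<nu>], of k] unfolding k_def by auto
    have nr: "\<nu> @ \<rho> \<in> B" using Sync_B[OF \<rho>(2)] .
    have n0: "\<nu>0 @ \<rho> \<in> B" using nr Cons sl_suffix[OF sl, of "[\<alpha>]"] by simp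
    have "\<nu>0 @ \<rho> \<in> Sync B (k - length \<nu>0)"
      using Sync_left[OF sl \<rho>(1) n0] Cons unfolding k_def by simp
    moreover have "k - length \<nu>0 = Suc (Suc l)" using Cons unfolding k_def by simp
    ultimately have s: "\<nu>0 @ \<rho> \<in> Sync B (Suc l)" using Sync_mono[OF sl] by metis
    have "Gamma_minus B l (\<nu> @ \<rho>) = Gamma_minus B l \<nu>" using Sync_ext_Gm[OF \<nu> nr] .
    then have "lclass B l (\<alpha> # \<nu>0 @ \<rho>) = lclass B l \<nu>" using Cons Gm_lclass by simp
    moreover have e: "((l, lclass B l (\<alpha> # \<nu>0 @ \<rho>)), \<alpha>, (Suc l, lclass B (Suc l) (\<nu>0 @ \<rho>))) \<in> lE (min_pres B) l"
      unfolding mp_E using s nr Cons by auto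
    ultimately show ?thesis using v by (intro bexI[OF _ e]) simp
  qed
qed

lemma mp_down:
  assumes sl: "is_subshift_lang \<Sigma> B" and \<mu>: "\<mu> \<in> Sync B (Suc l)"
  shows "Gamma_inf (min_pres B) (Suc l) (Suc l, lclass B (Suc l) \<mu>) \<subseteq> Gamma_inf (min_pres B) l (l, lclass B l \<mu>)"
proof
  fix x assume "x \<in> Gamma_inf (min_pres B) (Suc l) (Suc l, lclass B (Suc l) \<mu>)"
  then obtain es where xes: "x = (\<lambda>n. lab (min_pres B) (es n))"
    and es1: "\<forall>i. es i \<in> lE (min_pres B) (Suc l + i)"
    and es2: "src (min_pres B) (es 0) = (Suc l, lclass B (Suc l) \<mu>)"
    and es3: "\<forall>i. trg (min_pres B) (es i) = src (min_pres B) (es (Suc i))"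
    unfolding Gamma_inf_iff by blast
  have "\<forall>i. \<exists>p. es i = ((Suc (l + i), lclass B (Suc (l + i)) (fst p # snd p)), fst p, (Suc (Suc (l + i)), lclass B (Suc (Suc (l + i))) (snd p)))
     \<and> snd p \<in> Sync B (Suc (Suc (l + i))) \<and> fst p # snd p \<in> B"
  proof
    fix i
    from es1[rule_format, of i] obtain \<alpha> \<nu> where
      "es i = ((Suc (l + i), lclass B (Suc (l + i)) (\<alpha> # \<nu>)), \<alpha>, (Suc (Suc (l + i)), lclass B (Suc (Suc (l + i))) \<nu>))"
      "\<nu> \<in> Sync B (Suc (Suc (l + i)))" "\<alpha> # \<nu> \<in> B" unfolding mp_E by auto
    then show "\<exists>p. es i = ((Suc (l + i), lclass B (Suc (l + i)) (fst p # snd p)), fst p, (Suc (Suc (l + i)), lclass B (Suc (Suc (l + i))) (snd p)))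
     \<and> snd p \<in> Sync B (Suc (Suc (l + i))) \<and> fst p # snd p \<in> B"
      by (intro exI[of _ "(\<alpha>, \<nu>)"]) simp
  qed
  then have "\<exists>P. \<forall>i. es i = ((Suc (l + i), lclass B (Suc (l + i)) (fst (P i) # snd (P i))), fst (P i), (Suc (Suc (l + i)), lclass B (Suc (Suc (l + i))) (snd (P i))))
     \<and> snd (P i) \<in> Sync B (Suc (Suc (l + i))) \<and> fst (P i) # snd (P i) \<in> B"
    by (rule choice)
  then obtain P where P0: "\<forall>i. es i = ((Suc (l + i), lclass B (Suc (l + i)) (fst (P i) # snd (P i))), fst (P i), (Suc (Suc (l + i)), lclass B (Suc (Suc (l + i))) (snd (P i))))
     \<and> snd (P i) \<in> Sync B (Suc (Suc (l + i))) \<and> fst (P i) # snd (P i) \<in> B"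
    by (elim exE)
  note P = P0[rule_format, THEN conjunct1] P0[rule_format, THEN conjunct2, THEN conjunct1] P0[rule_format, THEN conjunct2, THEN conjunct2]
  define A where "A = (\<lambda>i. fst (P i))"
  define N where "N = (\<lambda>i. snd (P i))"
  have AN: "\<And>i. fst (P i) = A i" "\<And>i. snd (P i) = N i" by (simp_all add: A_def N_def)
  note P = P[unfolded AN]
  define es' where "es' = (\<lambda>i. ((l + i, lclass B (l + i) (A i # N i)), A i, (Suc (l + i), lclass B (Suc (l + i)) (N i))))"
  have e1: "es' i \<in> lE (min_pres B) (l + i)" for i
  proof -
    have "N i \<in> Sync B (Suc (l+i))" using Sync_mono[OF sl P(2)[of i]] .
    then show ?thesis unfolding mp_E es'_def
      apply (rule_tac exI[of _ "A i"], rule_tac exI[of _ "N i"])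
      using P(3)[of i] by simp
  qed
  have e3: "trg (min_pres B) (es' i) = src (min_pres B) (es' (Suc i))" for i
  proof -
    have "lclass B (Suc (Suc (l + i))) (N i) = lclass B (Suc (Suc (l + i))) (A (Suc i) # N (Suc i))"
      using es3[rule_format, of i] P(1)[of i] P(1)[of "Suc i"] by simp
    then have "Gamma_minus B (Suc (Suc (l + i))) (N i) = Gamma_minus B (Suc (Suc (l + i))) (A (Suc i) # N (Suc i))"
      using lclass_Gm[OF P(2)[of i]] by blast
    then have "Gamma_minus B (Suc (l + i)) (N i) = Gamma_minus B (Suc (l + i)) (A (Suc i) # N (Suc i))"
      using Gm_down[OF sl] by blast
    then have "lclass B (Suc (l + i)) (N i) = lclass B (Suc (l + i)) (A (Suc i) # N (Suc i))"
      by (rule Gm_lclass)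
    then show ?thesis by (simp add: es'_def)
  qed
  have e2: "src (min_pres B) (es' 0) = (l, lclass B l \<mu>)"
  proof -
    have "lclass B (Suc l) \<mu> = lclass B (Suc l) (A 0 # N 0)" using es2 P(1)[of 0] by simp
    then have "Gamma_minus B (Suc l) \<mu> = Gamma_minus B (Suc l) (A 0 # N 0)"
      using lclass_Gm[OF \<mu>] by blast
    then have "Gamma_minus B l \<mu> = Gamma_minus B l (A 0 # N 0)" using Gm_down[OF sl] by blast
    then have "lclass B l \<mu> = lclass B l (A 0 # N 0)" by (rule Gm_lclass)
    then show ?thesis by (simp add: es'_def)
  qed
  have "x = (\<lambda>n. lab (min_pres B) (es' n))"
    using P(1) by (simp add: xes es'_def A_def)
  then show "x \<in> Gamma_inf (min_pres B) l (l, lclass B l \<mu>)"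
    unfolding Gamma_inf_iff using e1 e2 e3 by blast
qed

lemma mp_lift:
  assumes N: "normal_subshift \<Sigma> B" and v: "v \<in> lV (min_pres B) l"
  shows "\<exists>u\<in>lV (min_pres B) (Suc l). Gamma_inf (min_pres B) (Suc l) u \<subseteq> Gamma_inf (min_pres B) l v"
proof -
  have sl: "is_subshift_lang \<Sigma> B" using N by (rule normal_sl)
  obtain \<nu> where v: "v = (l, lclass B l \<nu>)" and \<nu>: "\<nu> \<in> Sync B l" using v unfolding mp_V by blast
  obtain \<rho> where \<rho>: "\<nu> @ \<rho> \<in> Sync B (Suc l)"
    using normal_ex[OF N Sync_B[OF \<nu>], of "length \<nu> + l + 1"] by auto
  have "Gamma_minus B l (\<nu> @ \<rho>) = Gamma_minus B l \<nu>" using Sync_ext_Gm[OF \<nu> Sync_B[OF \<rho>]] .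
  then have "lclass B l (\<nu> @ \<rho>) = lclass B l \<nu>" by (rule Gm_lclass)
  then have "Gamma_inf (min_pres B) (Suc l) (Suc l, lclass B (Suc l) (\<nu> @ \<rho>)) \<subseteq> Gamma_inf (min_pres B) l v"
    using mp_down[OF sl \<rho>] v by simp
  moreover have "(Suc l, lclass B (Suc l) (\<nu> @ \<rho>)) \<in> lV (min_pres B) (Suc l)" using \<rho> unfolding mp_V by blast
  ultimately show ?thesis by blast
qed


lemma mp_III_I:
  assumes N: "normal_subshift \<Sigma> B" and III: "condIII (min_pres B)"
  shows "condI (min_pres B)"
proof (rule ccontr)
  let ?M = "min_pres B"
  have sl: "is_subshift_lang \<Sigma> B" using N by (rule normal_sl)
  assume "\<not> condI ?M"
  then obtain l v where v: "v \<in> lV ?M l" and uq: "\<forall>x\<in>Gamma_inf ?M l v. \<forall>y\<in>Gamma_inf ?M l v. x = y"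
    unfolding condI_def by blast
  have tc: "\<And>l e. e \<in> lE ?M l \<Longrightarrow> trg ?M e \<in> lV ?M (Suc l)" by (rule mp_tc)
  have out: "\<And>l v. v \<in> lV ?M l \<Longrightarrow> \<exists>e\<in>lE ?M l. src ?M e = v" by (rule mp_out[OF N])
  obtain x where x: "x \<in> Gamma_inf ?M l v" using Gamma_nonempty[OF tc out v] by blast
  obtain es where xes: "x = (\<lambda>n. lab ?M (es n))" and es1: "\<forall>i. es i \<in> lE ?M (l+i)"
    and es2: "src ?M (es 0) = v" and es3: "\<forall>i. trg ?M (es i) = src ?M (es (Suc i))"
    using x unfolding Gamma_inf_iff by blast
  obtain u where u: "u \<in> lV ?M (Suc l)" and uG: "Gamma_inf ?M (Suc l) u \<subseteq> Gamma_inf ?M l v"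
    using mp_lift[OF N v] by blast
  define u' where "u' = trg ?M (es 0)"
  have u': "u' \<in> lV ?M (Suc l)" unfolding u'_def using tc es1[rule_format, of 0] by simp
  have Gu: "z = x" if "z \<in> Gamma_inf ?M (Suc l) u" for z using that uG uq x by blast
  have Gu': "z = shift x" if zin: "z \<in> Gamma_inf ?M (Suc l) u'" for z
  proof -
    obtain fs where zfs: "z = (\<lambda>n. lab ?M (fs n))" and fs1: "\<forall>i. fs i \<in> lE ?M (Suc l+i)"
      and fs2: "src ?M (fs 0) = u'" and fs3: "\<forall>i. trg ?M (fs i) = src ?M (fs (Suc i))"
      using zin unfolding Gamma_inf_iff by blast
    define gs where "gs = case_nat (es 0) fs"
    have g1: "gs i \<in> lE ?M (l+i)" for i
      using es1[rule_format, of 0] fs1 by (cases i) (auto simp: gs_def)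
    have g3: "trg ?M (gs i) = src ?M (gs (Suc i))" for i
      using fs2 fs3 by (cases i) (auto simp: gs_def u'_def)
    have "(\<lambda>n. lab ?M (gs n)) \<in> Gamma_inf ?M l v"
      unfolding Gamma_inf_iff using g1 g3 es2 by (auto simp: gs_def)
    then have gx: "(\<lambda>n. lab ?M (gs n)) = x" using uq x by blast
    have "x (Suc n) = lab ?M (fs n)" for n using fun_cong[OF gx, of "Suc n"] by (simp add: gs_def)
    then show ?thesis by (auto simp: fun_eq_iff shift_def zfs)
  qed
  obtain y where y: "\<forall>w\<in>lV ?M (Suc l). y w \<in> Gamma_inf ?M (Suc l) w"
    "\<forall>w\<in>lV ?M (Suc l). \<forall>w'\<in>lV ?M (Suc l). \<forall>n\<in>{1..1}. (shift ^^ n) (y w) \<noteq> y w'"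
    using III unfolding condIII_def by (metis le_add1 le_numeral_extra(4) plus_1_eq_Suc)
  have "y u = x" using Gu y(1) u by blast
  moreover have "y u' = shift x" using Gu' y(1) u' by blast
  moreover have "(shift ^^ 1) (y u) \<noteq> y u'" using y(2) u u' by auto
  ultimately show False by simp
qed

theorem lemma2p13:
  shows "(\<forall>(\<Sigma>::'a set) (L::('v, 'e, 'a) lgraph). is_lgs \<Sigma> L \<and> left_resolving L \<longrightarrow>
            (condI L \<longleftrightarrow> condII L) \<and> (condII L \<longrightarrow> condIII L))
       \<and> (\<forall>(\<Sigma>::'a set) (B::'a list set). normal_subshift \<Sigma> B \<longrightarrow>
            (condI (min_pres B) \<longleftrightarrow> condII (min_pres B)) \<and>
            (condII (min_pres B) \<longleftrightarrow> condIII (min_pres B)))"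
proof (intro conjI allI impI)
  fix \<Sigma> :: "'a set" and L :: "('v, 'e, 'a) lgraph"
  assume "is_lgs \<Sigma> L \<and> left_resolving L"
  then have lg: "is_lgs \<Sigma> L" by simp
  have c: "finite \<Sigma> \<and> (\<forall>l. finite (lV L l)) \<and>
     (\<forall>l. \<forall>e\<in>lE L l. src L e \<in> lV L l \<and> trg L e \<in> lV L (Suc l) \<and> lab L e \<in> \<Sigma>) \<and>
     (\<forall>l. \<forall>v\<in>lV L l. \<exists>e\<in>lE L l. src L e = v)"
    using lg unfolding is_lgs_def by (elim conjE) (intro conjI; assumption)
  have tc: "\<And>l e. e \<in> lE L l \<Longrightarrow> trg L e \<in> lV L (Suc l)" using c by simp
  have out: "\<And>l v. v \<in> lV L l \<Longrightarrow> \<exists>e\<in>lE L l. src L e = v" using c by simp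
  have fin: "\<And>l. finite (lV L l)" using c by simp
  have fS: "finite \<Sigma>" using c by simp
  have labS: "\<And>l e. e \<in> lE L l \<Longrightarrow> lab L e \<in> \<Sigma>" using c by simp
  show "condI L \<longleftrightarrow> condII L" using I_imp_II[OF tc] II_imp_I[OF tc out] by blast
  show "condIII L" if II: "condII L"
  proof -
    have ne: "\<And>l v. v \<in> lV L l \<Longrightarrow> \<exists>x. x \<in> Gamma_inf L l v"
      by (rule Gamma_nonempty[OF tc out])
    show "condIII L" by (rule II_imp_III[OF fin fS labS ne II])
  qed
next
  fix \<Sigma> :: "'a set" and B :: "'a list set"
  assume N: "normal_subshift \<Sigma> B"
  have sl: "is_subshift_lang \<Sigma> B" using N by (rule normal_sl)
  have tc: "\<And>l e. e \<in> lE (min_pres B) l \<Longrightarrow> trg (min_pres B) e \<in> lV (min_pres B) (Suc l)" by (rule mp_tc)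
  have out: "\<And>l v. v \<in> lV (min_pres B) l \<Longrightarrow> \<exists>e\<in>lE (min_pres B) l. src (min_pres B) e = v"
    by (rule mp_out[OF N])
  have fS: "finite \<Sigma>" using sl by (simp add: is_subshift_lang_def)
  show "condI (min_pres B) \<longleftrightarrow> condII (min_pres B)" using I_imp_II[OF tc] II_imp_I[OF tc out] by blast
  show "condII (min_pres B) \<longleftrightarrow> condIII (min_pres B)"
  proof
    assume II: "condII (min_pres B)"
    have ne: "\<And>l v. v \<in> lV (min_pres B) l \<Longrightarrow> \<exists>x. x \<in> Gamma_inf (min_pres B) l v"
      by (rule Gamma_nonempty[OF tc out])
    show "condIII (min_pres B)" by (rule II_imp_III[OF mp_fin[OF sl] fS mp_lab_in[OF sl] ne II])
  next
    assume "condIII (min_pres B)"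
    then show "condII (min_pres B)" using mp_III_I[OF N] I_imp_II[OF tc] by blast
  qed
qed

end
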